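(* For a root $\beta=t_i-t_j$ of $\mathrm{SL}_n(\mathbb C)$, $w_\beta$ is a maximal element (in the Bruhat order) of $\Omega_H=\{w_\gamma:\gamma\in\Delta_H\}$ if and only if $(i,j)$ is a corner of the modified Hessenberg stair shape.
   Context: Let $G=\mathrm{SL}_n(\mathbb C)$, $n\ge2$, $B$ upper triangular, $T$ diagonal, $W=S_n$ with Bruhat order; $t_i-t_j$ denotes the root $\mathrm{diag}(t_1,\dots,t_n)\mapsto t_it_j^{-1}$ with root space $\mathbb C E_{ij}$. A Hessenberg function is a weakly increasing $h:\{1,\dots,n\}\to\{1,\dots,n\}$ with $j\le h(j)$; its Hessenberg subspace is $H=\{(a_{ij})\in\mathfrak{sl}_n: a_{ij}=0\text{ for }i>h(j)\}$ and $\Delta_H$ is the set of roots $t_i-t_j$ with $E_{ij}\in H$. For a root $\beta=t_i-t_j$, $w_\beta\in S_n$ denotes the longest permutation with $w_\beta(i)=1$ and $w_\beta(j)=n$. With the convention $h(0):=0$, the modified Hessenberg function is $\overline h(j)=j-1$ if $h(j-1)=j-1$ and $h(j)=j$, and $\overline h(j)=h(j)$ otherwise; set $\overline h(0):=0$. A pair $(i,j)\in\{1,\dots,n\}^2$ is a corner of the modified Hessenberg stair shape if $i=\overline h(j)$ and $\overline h(j-1)<\overline h(j)$. *)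

theory Defs
  imports "HOL-Combinatorics.Combinatorics"
begin

definition perms :: "nat \<Rightarrow> (nat \<Rightarrow> nat) set" where
  "perms n = {w. w permutes {1..n}}"

text \<open>Coxeter length = number of inversions.\<close>
definition inv_len :: "nat \<Rightarrow> (nat \<Rightarrow> nat) \<Rightarrow> nat" where
  "inv_len n w = card {(a, b). a \<in> {1..n} \<and> b \<in> {1..n} \<and> a < b \<and> w b < w a}"

definition bruhat_step :: "nat \<Rightarrow> (nat \<Rightarrow> nat) \<Rightarrow> (nat \<Rightarrow> nat) \<Rightarrow> bool" where
  "bruhat_step n u v \<longleftrightarrow> u \<in> perms n \<and>
     (\<exists>a\<in>{1..n}. \<exists>b\<in>{1..n}. a \<noteq> b \<and> v = u \<circ> transpose a b)
     \<and> inv_len n u < inv_len n v"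

definition bruhat_le :: "nat \<Rightarrow> (nat \<Rightarrow> nat) \<Rightarrow> (nat \<Rightarrow> nat) \<Rightarrow> bool" where
  "bruhat_le n u v \<longleftrightarrow> u \<in> perms n \<and> v \<in> perms n \<and> (bruhat_step n)\<^sup>*\<^sup>* u v"

definition hessenberg :: "nat \<Rightarrow> (nat \<Rightarrow> nat) \<Rightarrow> bool" where
  "hessenberg n h \<longleftrightarrow> (\<forall>j\<in>{1..n}. j \<le> h j \<and> h j \<le> n) \<and>
     (\<forall>j\<in>{1..n}. \<forall>k\<in>{1..n}. j \<le> k \<longrightarrow> h j \<le> h k)"

text \<open>Roots t_i - t_j are encoded by pairs (i,j), i \<noteq> j.\<close>
definition roots :: "nat \<Rightarrow> (nat \<times> nat) set" where
  "roots n = {(i, j). i \<in> {1..n} \<and> j \<in> {1..n} \<and> i \<noteq> j}"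

text \<open>Delta_H: roots whose root space C E_ij lies in H, i.e. i \<le> h j.\<close>
definition Delta_H :: "nat \<Rightarrow> (nat \<Rightarrow> nat) \<Rightarrow> (nat \<times> nat) set" where
  "Delta_H n h = {(i, j). (i, j) \<in> roots n \<and> i \<le> h j}"

definition w_root :: "nat \<Rightarrow> nat \<times> nat \<Rightarrow> (nat \<Rightarrow> nat)" where
  "w_root n \<beta> = (THE w. w \<in> perms n \<and> w (fst \<beta>) = 1 \<and> w (snd \<beta>) = n \<and>
      (\<forall>v \<in> perms n. v (fst \<beta>) = 1 \<and> v (snd \<beta>) = n \<longrightarrow> inv_len n v \<le> inv_len n w))"

definition Omega_H :: "nat \<Rightarrow> (nat \<Rightarrow> nat) \<Rightarrow> (nat \<Rightarrow> nat) set" where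
  "Omega_H n h = w_root n ` Delta_H n h"

definition bruhat_maximal :: "nat \<Rightarrow> (nat \<Rightarrow> nat) set \<Rightarrow> (nat \<Rightarrow> nat) \<Rightarrow> bool" where
  "bruhat_maximal n S w \<longleftrightarrow> w \<in> S \<and> (\<forall>u\<in>S. bruhat_le n w u \<longrightarrow> u = w)"

definition h0 :: "(nat \<Rightarrow> nat) \<Rightarrow> nat \<Rightarrow> nat" where
  "h0 h j = (if j = 0 then 0 else h j)"

definition hbar :: "(nat \<Rightarrow> nat) \<Rightarrow> nat \<Rightarrow> nat" where
  "hbar h j = (if j = 0 then 0
               else if h0 h (j - 1) = j - 1 \<and> h j = j then j - 1 else h j)"

definition is_corner :: "nat \<Rightarrow> (nat \<Rightarrow> nat) \<Rightarrow> nat \<Rightarrow> nat \<Rightarrow> bool" where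
  "is_corner n h i j \<longleftrightarrow> i \<in> {1..n} \<and> j \<in> {1..n} \<and>
     i = hbar h j \<and> hbar h (j - 1) < hbar h j"

end

theory Submission
  imports Defs
begin

lemma swap_dec:
  assumes "p < q" "p \<in> {1..n}" "q \<in> {1..n}" "w q < (w p :: nat)"
  shows "inv_len n (w \<circ> transpose p q) < inv_len n w"
proof -
  define \<tau> where "\<tau> = transpose p q"
  have tt: "\<And>x. \<tau> (\<tau> x) = x" by (simp add: \<tau>_def)
  have tin: "\<And>x. x \<in> {1..n} \<Longrightarrow> \<tau> x \<in> {1..n}" using assms(2,3) by (simp add: \<tau>_def transpose_def)
  define Iv where "Iv = {(a,b). a\<in>{1..n} \<and> b\<in>{1..n} \<and> a<b \<and> (w\<circ>\<tau>) b < (w\<circ>\<tau>) a}"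
  define Iu where "Iu = {(a, b). a \<in> {1..n} \<and> b \<in> {1..n} \<and> a < b \<and> w b < w a}"
  define \<phi> where "\<phi> = (\<lambda>(a::nat,b::nat). if \<tau> a < \<tau> b then (\<tau> a, \<tau> b) else (a,b))"
  have fin: "finite Iu"
    by (rule finite_subset[of _ "{1..n}\<times>{1..n}"]) (auto simp: Iu_def)
  have inj: "inj_on \<phi> Iv"
  proof (rule inj_onI)
    fix x y assume "x \<in> Iv" "y \<in> Iv" "\<phi> x = \<phi> y"
    moreover obtain a b c d where "x = (a,b)" "y = (c,d)" by fastforce
    ultimately have ab: "a < b" "c < d" and e: "\<phi> (a,b) = \<phi> (c,d)" by (auto simp: Iv_def)
    show "x = y"
    proof (cases "\<tau> a < \<tau> b")
      case True note T = this
      show ?thesis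
      proof (cases "\<tau> c < \<tau> d")
        case True
        with T e have "\<tau> a = \<tau> c" "\<tau> b = \<tau> d" by (auto simp: \<phi>_def)
        then have "a = c" "b = d" by (metis tt)+
        then show ?thesis using \<open>x = (a,b)\<close> \<open>y = (c,d)\<close> by simp
      next
        case False
        with T e have "\<tau> a = c" "\<tau> b = d" by (auto simp: \<phi>_def)
        then have "a = \<tau> c" "b = \<tau> d" by (metis tt)+
        with False ab show ?thesis by simp
      qed
    next
      case False note F = this
      show ?thesis
      proof (cases "\<tau> c < \<tau> d")
        case True
        with F e have "a = \<tau> c" "b = \<tau> d" by (auto simp: \<phi>_def)
        with F ab show ?thesis by (simp add: tt)
      next
        case False
        with F e have "a = c" "b = d" by (auto simp: \<phi>_def)
        then show ?thesis using \<open>x = (a,b)\<close> \<open>y = (c,d)\<close> by simp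
      qed
    qed
  qed
  have sub: "\<phi> ` Iv \<subseteq> Iu - {(p,q)}"
  proof
    fix z assume "z \<in> \<phi> ` Iv"
    then obtain a b where ab: "(a,b) \<in> Iv" "z = \<phi> (a,b)" by auto
    then have a: "a \<in> {1..n}" "b \<in> {1..n}" "a < b" "w (\<tau> b) < w (\<tau> a)" by (auto simp: Iv_def)
    show "z \<in> Iu - {(p,q)}"
    proof (cases "\<tau> a < \<tau> b")
      case True
      then have "z = (\<tau> a, \<tau> b)" using ab by (simp add: \<phi>_def)
      moreover have "(\<tau> a, \<tau> b) \<noteq> (p,q)" using True a(3) assms(1) by (auto simp: \<tau>_def transpose_def split: if_splits)
      ultimately show ?thesis using True a tin by (auto simp: Iu_def)
    next
      case False
      then have z: "z = (a,b)" using ab by (simp add: \<phi>_def)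
      have "w b < w a \<and> (a,b) \<noteq> (p,q)"
      proof -
        have "(a = p \<and> p < b \<and> b < q) \<or> (b = q \<and> p < a \<and> a < q)"
          using False a(3) a(4) assms(1) assms(4) unfolding \<tau>_def transpose_def
          by (auto split: if_splits)
        then show ?thesis
        proof
          assume h: "a = p \<and> p < b \<and> b < q"
          then have "\<tau> a = q" "\<tau> b = b" by (auto simp: \<tau>_def)
          with a(4) h assms(4) show ?thesis by auto
        next
          assume h: "b = q \<and> p < a \<and> a < q"
          then have "\<tau> b = p" "\<tau> a = a" by (auto simp: \<tau>_def)
          with a(4) h assms(4) show ?thesis by auto
        qed
      qed
      then show ?thesis using z a by (auto simp: Iu_def)
    qed
  qed
  have pq: "(p,q) \<in> Iu" using assms by (auto simp: Iu_def)
  have "card Iv \<le> card (Iu - {(p,q)})"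
    using card_inj_on_le[OF inj sub] fin by auto
  also have "\<dots> < card Iu" using fin pq
    by (metis card_Diff1_less)
  finally show ?thesis unfolding inv_len_def Iv_def Iu_def \<tau>_def .
qed


definition cF :: "nat \<Rightarrow> nat \<Rightarrow> nat \<Rightarrow> nat \<Rightarrow> nat" where
  "cF n i j k = card {m \<in> {1..n}. m < k \<and> m \<noteq> i \<and> m \<noteq> j}"

definition F :: "nat \<Rightarrow> nat \<Rightarrow> nat \<Rightarrow> nat \<Rightarrow> nat" where
  "F n i j k = (if k \<in> {1..n} then (if k = i then 1 else if k = j then n
      else n - 1 - cF n i j k) else k)"

definition Rel :: "nat \<Rightarrow> nat \<Rightarrow> nat \<Rightarrow> nat \<Rightarrow> bool" where
  "Rel i j a b \<longleftrightarrow> a \<noteq> b \<and> a \<noteq> i \<and> b \<noteq> j \<and> (a = j \<or> b = i \<or> a < b)"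

lemma cF_mono:
  assumes "k < k'" "k \<in> {1..n}" "k \<noteq> i" "k \<noteq> j"
  shows "cF n i j k < cF n i j k'"
  unfolding cF_def
proof (rule psubset_card_mono)
  show "finite {m \<in> {1..n}. m < k' \<and> m \<noteq> i \<and> m \<noteq> j}" by simp
  show "{m \<in> {1..n}. m < k \<and> m \<noteq> i \<and> m \<noteq> j} \<subset> {m \<in> {1..n}. m < k' \<and> m \<noteq> i \<and> m \<noteq> j}"
    using assms by auto
qed

lemma cF_bound:
  assumes "k \<in> {1..n}" "k \<noteq> i" "k \<noteq> j" "i \<in> {1..n}" "j \<in> {1..n}" "i \<noteq> j"
  shows "cF n i j k + 3 \<le> n"
proof -
  have "{m \<in> {1..n}. m < k \<and> m \<noteq> i \<and> m \<noteq> j} \<subseteq> {1..n} - {i,j,k}" by auto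
  then have "cF n i j k \<le> card ({1..n} - {i,j,k})" unfolding cF_def by (intro card_mono) auto
  also have "\<dots> = n - 3"
    using assms by (subst card_Diff_subset) auto
  finally have "cF n i j k \<le> n - 3" .
  moreover have "card {i,j,k} \<le> card {1..n}" using assms by (intro card_mono) auto
  ultimately show ?thesis using assms by auto
qed

lemma F_vals:
  assumes "(i,j) \<in> roots n"
  shows "F n i j i = 1" "F n i j j = n"
    "\<And>k. k \<in> {1..n} \<Longrightarrow> k \<noteq> i \<Longrightarrow> k \<noteq> j \<Longrightarrow> 2 \<le> F n i j k \<and> F n i j k + 1 \<le> n"
    "\<And>k. k \<notin> {1..n} \<Longrightarrow> F n i j k = k"
proof -
  show "F n i j i = 1" "F n i j j = n" "\<And>k. k \<notin> {1..n} \<Longrightarrow> F n i j k = k"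
    using assms by (auto simp: F_def roots_def)
  fix k assume k: "k \<in> {1..n}" "k \<noteq> i" "k \<noteq> j"
  have "cF n i j k + 3 \<le> n" using cF_bound[of k n i j] k assms by (auto simp: roots_def)
  then show "2 \<le> F n i j k \<and> F n i j k + 1 \<le> n" using k by (auto simp: F_def)
qed

lemma F_vals2:
  assumes "(i,j) \<in> roots n" "k \<in> {1..n}"
  shows "1 \<le> F n i j k \<and> F n i j k \<le> n \<and> (F n i j k = 1 \<longleftrightarrow> k = i) \<and> (F n i j k = n \<longleftrightarrow> k = j)"
proof -
  have n: "n \<ge> 2" "i \<noteq> j" using assms(1) by (auto simp: roots_def)
  show ?thesis
  proof (cases "k = i \<or> k = j")
    case True then show ?thesis using F_vals[OF assms(1)] n by auto
  next
    case False then show ?thesis using F_vals(3)[OF assms(1) assms(2)] by auto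
  qed
qed

lemma F_rel:
  assumes "(i,j) \<in> roots n" "a \<in> {1..n}" "b \<in> {1..n}"
  shows "F n i j b < F n i j a \<longleftrightarrow> Rel i j a b"
proof -
  note V = F_vals[OF assms(1)]
  have ij: "i \<noteq> j" "i \<in> {1..n}" "j \<in> {1..n}" using assms(1) by (auto simp: roots_def)
  show ?thesis
  proof (cases "a = i \<or> a = j \<or> b = i \<or> b = j")
    case True
    have "i \<noteq> j" using ij by simp
    then show ?thesis using F_vals2[OF assms(1) assms(2)] F_vals2[OF assms(1) assms(3)] True
      unfolding Rel_def by (metis le_antisym less_le not_less)
  next
    case False
    then have "F n i j a = n - 1 - cF n i j a" "F n i j b = n - 1 - cF n i j b"
      using assms by (auto simp: F_def)
    moreover have "a < b \<Longrightarrow> cF n i j a < cF n i j b" using cF_mono False assms by blast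
    moreover have "b < a \<Longrightarrow> cF n i j b < cF n i j a" using cF_mono False assms by blast
    moreover have "cF n i j a + 3 \<le> n" "cF n i j b + 3 \<le> n"
      using cF_bound False assms ij by blast+
    ultimately show ?thesis using False unfolding Rel_def
      by (cases a b rule: linorder_cases) auto
  qed
qed

lemma F_perm:
  assumes "(i,j) \<in> roots n"
  shows "F n i j permutes {1..n}"
proof (rule bij_imp_permutes)
  have ij: "i \<noteq> j" "i \<in> {1..n}" "j \<in> {1..n}" using assms(1) by (auto simp: roots_def)
  have inj: "inj_on (F n i j) {1..n}"
  proof (rule inj_onI)
    fix a b assume ab: "a \<in> {1..n}" "b \<in> {1..n}" "F n i j a = F n i j b"
    then have "\<not> Rel i j a b" "\<not> Rel i j b a" using F_rel[OF assms] by (metis less_irrefl)+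
    then show "a = b" unfolding Rel_def using ij by auto
  qed
  have img: "F n i j ` {1..n} \<subseteq> {1..n}"
  proof
    fix y assume "y \<in> F n i j ` {1..n}"
    then obtain k where k: "k \<in> {1..n}" "y = F n i j k" by auto
    then show "y \<in> {1..n}" using F_vals[OF assms] ij
      by (cases "k = i \<or> k = j") fastforce+
  qed
  have "F n i j ` {1..n} = {1..n}" using endo_inj_surj[OF _ img inj] by simp
  then show "bij_betw (F n i j) {1..n} {1..n}" using inj by (simp add: bij_betw_def)
  show "\<And>x. x \<notin> {1..n} \<Longrightarrow> F n i j x = x" using F_vals[OF assms] by simp
qed


lemma perm_rank:
  assumes "w permutes {1..n}" "a \<in> {1..n}"
  shows "w a = card {b \<in> {1..n}. w b \<le> w a}"
proof -
  have im: "w ` {1..n} = {1..n}" using permutes_image[OF assms(1)] .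
  have inj: "inj_on w {b \<in> {1..n}. w b \<le> w a}"
    using permutes_inj[OF assms(1)] by (auto simp: inj_on_def inj_def)
  have "w ` {b \<in> {1..n}. w b \<le> w a} = {1..w a}"
  proof
    show "w ` {b \<in> {1..n}. w b \<le> w a} \<subseteq> {1..w a}"
      using im by fastforce
    show "{1..w a} \<subseteq> w ` {b \<in> {1..n}. w b \<le> w a}"
    proof
      fix y assume y: "y \<in> {1..w a}"
      have "w a \<in> {1..n}" using im assms(2) by blast
      then have "y \<in> {1..n}" using y by auto
      then obtain b where "b \<in> {1..n}" "y = w b" using im by (metis imageE)
      then show "y \<in> w ` {b \<in> {1..n}. w b \<le> w a}" using y by auto
    qed
  qed
  then have "card {b \<in> {1..n}. w b \<le> w a} = card {1..w a}"
    using card_image[OF inj] by simp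
  then show ?thesis by simp
qed

lemma perm_eq_by_rel:
  fixes u v :: "nat \<Rightarrow> nat"
  assumes "u permutes {1..n}" "v permutes {1..n}"
    "\<And>a b. a \<in> {1..n} \<Longrightarrow> b \<in> {1..n} \<Longrightarrow> (u b < u a \<longleftrightarrow> v b < v a)"
  shows "u = v"
proof
  fix x show "u x = v x"
  proof (cases "x \<in> {1..n}")
    case True
    have "\<And>b. b \<in> {1..n} \<Longrightarrow> (u b \<le> u x \<longleftrightarrow> v b \<le> v x)"
      using assms(3)[of _ x] True by (meson not_le)

    then have "{b \<in> {1..n}. u b \<le> u x} = {b \<in> {1..n}. v b \<le> v x}" by auto
    then show ?thesis using perm_rank[OF assms(1) True] perm_rank[OF assms(2) True] by simp
  next
    case False then show ?thesis using assms(1,2) by (simp add: permutes_not_in)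
  qed
qed

definition Inv :: "nat \<Rightarrow> (nat \<Rightarrow> nat) \<Rightarrow> (nat \<times> nat) set" where
  "Inv n w = {(a, b). a \<in> {1..n} \<and> b \<in> {1..n} \<and> a < b \<and> w b < w a}"

lemma inv_len_Inv: "inv_len n w = card (Inv n w)" by (simp add: inv_len_def Inv_def)

lemma finite_Inv: "finite (Inv n w)"
  by (rule finite_subset[of _ "{1..n}\<times>{1..n}"]) (auto simp: Inv_def)

lemma Inv_F:
  assumes "(i,j) \<in> roots n"
  shows "Inv n (F n i j) = {(a, b). a \<in> {1..n} \<and> b \<in> {1..n} \<and> a < b \<and> a \<noteq> i \<and> b \<noteq> j}"
proof -
  have k: "\<And>a b. a\<in>{1..n} \<Longrightarrow> b\<in>{1..n} \<Longrightarrow> a<b \<Longrightarrow> (F n i j b < F n i j a \<longleftrightarrow> a\<noteq>i \<and> b\<noteq>j)"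
  proof -
    fix a b assume ab: "a\<in>{1..n}" "b\<in>{1..n}" "a<b"
    show "(F n i j b < F n i j a \<longleftrightarrow> a\<noteq>i \<and> b\<noteq>j)"
      unfolding F_rel[OF assms ab(1,2)] Rel_def using ab(3) by auto
  qed
  show ?thesis unfolding Inv_def
  proof (intro set_eqI)
    fix x :: "nat \<times> nat"
    obtain a b where x: "x = (a,b)" by fastforce
    show "x \<in> {(a, b). a \<in> {1..n} \<and> b \<in> {1..n} \<and> a < b \<and> F n i j b < F n i j a} \<longleftrightarrow>
      x \<in> {(a, b). a \<in> {1..n} \<and> b \<in> {1..n} \<and> a < b \<and> a \<noteq> i \<and> b \<noteq> j}"
      unfolding x using k[of a b] by auto
  qed
qed

lemma Inv_sub:
  assumes "(i,j) \<in> roots n" "v permutes {1..n}" "v i = 1" "v j = n"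
  shows "Inv n v \<subseteq> Inv n (F n i j)"
proof
  fix x assume "x \<in> Inv n v"
  then obtain a b where x: "x = (a,b)" "a \<in> {1..n}" "b \<in> {1..n}" "a < b" "v b < v a" by (auto simp: Inv_def)
  have "v a \<in> {1..n}" using x(2) permutes_in_image[OF assms(2)] by blast
  have "v b \<in> {1..n}" using x(3) permutes_in_image[OF assms(2)] by blast
  have "a \<noteq> i"
  proof
    assume "a = i" then have "v a = 1" using assms(3) by simp
    then show False using x(5) \<open>v b \<in> {1..n}\<close> by simp
  qed
  have "b \<noteq> j"
  proof
    assume "b = j" then have "v b = n" using assms(4) by simp
    then show False using x(5) \<open>v a \<in> {1..n}\<close> by simp
  qed
  show "x \<in> Inv n (F n i j)" unfolding Inv_F[OF assms(1)] x(1)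
    using x(2-4) \<open>a \<noteq> i\<close> \<open>b \<noteq> j\<close> by simp
qed

lemma perm_rel_sym:
  fixes w :: "nat \<Rightarrow> nat"
  assumes "w permutes {1..n}" "a \<noteq> b"
  shows "w b < w a \<longleftrightarrow> \<not> w a < w b"
proof -
  have "w a \<noteq> w b" using permutes_inj[OF assms(1)] assms(2) by (auto simp: inj_def)
  then show ?thesis by auto
qed

lemma w_root_F:
  assumes "(i,j) \<in> roots n"
  shows "w_root n (i,j) = F n i j"
  unfolding w_root_def fst_conv snd_conv
proof (rule the_equality)
  have P: "F n i j \<in> perms n" using F_perm[OF assms] by (simp add: perms_def)
  show "F n i j \<in> perms n \<and> F n i j i = 1 \<and> F n i j j = n \<and>
    (\<forall>v\<in>perms n. v i = 1 \<and> v j = n \<longrightarrow> inv_len n v \<le> inv_len n (F n i j))"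
  proof (intro conjI ballI impI)
    show "F n i j \<in> perms n" by (rule P)
    show "F n i j i = 1" "F n i j j = n" using F_vals[OF assms] by auto
    fix v assume "v \<in> perms n" "v i = 1 \<and> v j = n"
    then have "Inv n v \<subseteq> Inv n (F n i j)" using Inv_sub[OF assms] by (auto simp: perms_def)
    then show "inv_len n v \<le> inv_len n (F n i j)"
      unfolding inv_len_Inv by (rule card_mono[OF finite_Inv])
  qed
  fix w assume w: "w \<in> perms n \<and> w i = 1 \<and> w j = n \<and>
    (\<forall>v\<in>perms n. v i = 1 \<and> v j = n \<longrightarrow> inv_len n v \<le> inv_len n w)"
  have wp: "w permutes {1..n}" using w by (simp add: perms_def)
  have le: "card (Inv n (F n i j)) \<le> card (Inv n w)"
    using w P F_vals[OF assms] by (auto simp: inv_len_Inv)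
  have sub: "Inv n w \<subseteq> Inv n (F n i j)" using Inv_sub[OF assms wp] w by auto
  have eq: "Inv n w = Inv n (F n i j)"
    using card_subset_eq[OF finite_Inv sub] le card_mono[OF finite_Inv sub] by auto
  have key: "\<And>a b. a \<in> {1..n} \<Longrightarrow> b \<in> {1..n} \<Longrightarrow> a < b \<Longrightarrow> (w b < w a \<longleftrightarrow> F n i j b < F n i j a)"
  proof -
    fix a b assume "a \<in> {1..n}" "b \<in> {1..n}" "a < b"
    then show "(w b < w a \<longleftrightarrow> F n i j b < F n i j a)"
    proof -
      have "(a,b) \<in> Inv n w \<longleftrightarrow> (a,b) \<in> Inv n (F n i j)" using eq by simp
      then show ?thesis using \<open>a \<in> {1..n}\<close> \<open>b \<in> {1..n}\<close> \<open>a < b\<close> unfolding Inv_def by simp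
    qed
  qed
  show "w = F n i j"
  proof (rule perm_eq_by_rel[OF wp F_perm[OF assms]])
    fix a b assume ab: "a \<in> {1..n}" "b \<in> {1..n}"
    show "w b < w a \<longleftrightarrow> F n i j b < F n i j a"
    proof (cases a b rule: linorder_cases)
      case less then show ?thesis using key ab by blast
    next
      case equal then show ?thesis by simp
    next
      case greater
      then show ?thesis using key[OF ab(2) ab(1) greater] perm_rel_sym[OF wp, of a b]
        perm_rel_sym[OF F_perm[OF assms], of a b] by auto
    qed
  qed
qed


lemma step_pos:
  assumes "bruhat_step n w v" "w y = c" "v z = c" "c = 1 \<or> c = n"
  shows "(c = 1 \<longrightarrow> y \<le> z) \<and> (c = n \<longrightarrow> z \<le> y)"
proof -
  obtain a b where ab: "a \<in> {1..n}" "b \<in> {1..n}" "a \<noteq> b" "v = w \<circ> transpose a b"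
    and wp: "w permutes {1..n}" and inc: "inv_len n w < inv_len n v"
    using assms(1) by (auto simp: bruhat_step_def perms_def)
  have injw: "inj w" using permutes_inj[OF wp] .
  have "w (transpose a b z) = w y" using assms(2,3) ab(4) by simp
  then have "transpose a b z = y" using injw by (simp add: inj_eq)
  then have z: "z = transpose a b y" by (metis transpose_involutory)
  have wa: "w a \<in> {1..n}" "w b \<in> {1..n}" using ab permutes_in_image[OF wp] by auto
  have wne: "w a \<noteq> w b" using injw ab(3) by (simp add: inj_eq)
  have noab: "\<not> (a < b \<and> w b < w a)"
    using swap_dec[of a b n w] ab inc by auto
  have noba: "\<not> (b < a \<and> w a < w b)"
    using swap_dec[of b a n w] ab inc by (auto simp: transpose_commute)
  show ?thesis
  proof (cases "y = a")
    case True
    then have "z = b" using z by simp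
    then show ?thesis using True noab noba wa wne assms(2,4) ab(3) by (cases a b rule: linorder_cases) auto
  next
    case F1: False
    show ?thesis
    proof (cases "y = b")
      case True
      then have "z = a" using z ab(3) by simp
      then show ?thesis using True noab noba wa wne assms(2,4) ab(3) by (cases a b rule: linorder_cases) auto
    next
      case False
      then have "z = y" using z F1 by simp
      then show ?thesis by simp
    qed
  qed
qed

lemma bruhat_pos:
  assumes "bruhat_le n u v"
  shows "(\<forall>x z. u x = 1 \<longrightarrow> v z = 1 \<longrightarrow> x \<le> z) \<and> (\<forall>x z. u x = n \<longrightarrow> v z = n \<longrightarrow> z \<le> x)"
proof -
  have up: "u permutes {1..n}" using assms by (simp add: bruhat_le_def perms_def)
  have inju: "inj u" using permutes_inj[OF up] .
  have "(bruhat_step n)\<^sup>*\<^sup>* u v" using assms by (simp add: bruhat_le_def)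
  then show ?thesis
  proof (induction rule: rtranclp_induct)
    case base
    show ?case
    proof (intro conjI allI impI)
      fix x z assume "u x = 1" "u z = 1"
      then have "x = z" using inju by (metis injD)
      then show "x \<le> z" by simp
    next
      fix x z assume "u x = n" "u z = n"
      then have "x = z" using inju by (metis injD)
      then show "z \<le> x" by simp
    qed
  next
    case (step w v)
    show ?case
    proof (intro conjI allI impI)
      fix x z assume xz: "u x = 1" "v z = 1"
      obtain a b where ab: "v = w \<circ> transpose a b" using step(2) by (auto simp: bruhat_step_def)
      have "w (transpose a b z) = 1" using xz ab by simp
      then have "x \<le> transpose a b z" using step(3) xz by blast
      also have "transpose a b z \<le> z" using step_pos[OF step(2) \<open>w (transpose a b z) = 1\<close> xz(2)] by simp
      finally show "x \<le> z" .
    next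
      fix x z assume xz: "u x = n" "v z = n"
      obtain a b where ab: "v = w \<circ> transpose a b" using step(2) by (auto simp: bruhat_step_def)
      have "w (transpose a b z) = n" using xz ab by simp
      then have "transpose a b z \<le> x" using step(3) xz by blast
      moreover have "z \<le> transpose a b z" using step_pos[OF step(2) \<open>w (transpose a b z) = n\<close> xz(2)] by simp
      ultimately show "z \<le> x" by simp
    qed
  qed
qed

lemma F_le_nec:
  assumes "(i,j) \<in> roots n" "(i',j') \<in> roots n" "bruhat_le n (F n i j) (F n i' j')"
  shows "i \<le> i' \<and> j' \<le> j"
  using bruhat_pos[OF assms(3)] F_vals(1,2)[OF assms(1)] F_vals(1,2)[OF assms(2)] by blast


lemma move:
  assumes r: "(i,j) \<in> roots n" "(i',j') \<in> roots n" and ab: "a < b" "a \<in> {1..n}" "b \<in> {1..n}"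
    and H: "\<And>x y. x \<in> {1..n} \<Longrightarrow> y \<in> {1..n} \<Longrightarrow>
       Rel i j (transpose a b x) (transpose a b y) \<longleftrightarrow> Rel i' j' x y"
    and R: "Rel i' j' a b"
  shows "bruhat_step n (F n i j) (F n i' j')"
proof -
  have tin: "\<And>x. x \<in> {1..n} \<Longrightarrow> transpose a b x \<in> {1..n}" using ab by (simp add: transpose_def)
  have P: "F n i j permutes {1..n}" "F n i' j' permutes {1..n}" using F_perm r by auto
  have Pc: "F n i j \<circ> transpose a b permutes {1..n}"
    using permutes_compose[OF permutes_swap_id[OF ab(2,3)] P(1)] .
  have eq: "F n i' j' = F n i j \<circ> transpose a b"
  proof (rule perm_eq_by_rel[OF P(2) Pc])
    fix x y assume xy: "x \<in> {1..n}" "y \<in> {1..n}"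
    show "F n i' j' y < F n i' j' x \<longleftrightarrow> (F n i j \<circ> transpose a b) y < (F n i j \<circ> transpose a b) x"
      using F_rel[OF r(2) xy] F_rel[OF r(1) tin[OF xy(1)] tin[OF xy(2)]] H[OF xy] by simp
  qed
  have "F n i' j' b < F n i' j' a" using F_rel[OF r(2) ab(2,3)] R by simp
  then have "inv_len n (F n i' j' \<circ> transpose a b) < inv_len n (F n i' j')"
    using swap_dec[OF ab] by blast
  moreover have "F n i' j' \<circ> transpose a b = F n i j" using eq by (simp add: comp_assoc)
  ultimately have "inv_len n (F n i j) < inv_len n (F n i' j')" by simp
  moreover have "\<exists>a'\<in>{1..n}. \<exists>b'\<in>{1..n}. a' \<noteq> b' \<and> F n i' j' = F n i j \<circ> transpose a' b'"
    using eq ab by (intro bexI[of _ a] bexI[of _ b]) auto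
  ultimately show ?thesis unfolding bruhat_step_def perms_def using P(1) by blast
qed

lemma M1:
  assumes "(i,j) \<in> roots n" "i + 1 \<noteq> j" "i + 1 \<le> n"
  shows "bruhat_step n (F n i j) (F n (i+1) j)"
  apply (rule move[where a = i and b = "i+1"])
  using assms by (auto simp: roots_def Rel_def transpose_def)

lemma M2:
  assumes "(i,i+1) \<in> roots n" "i + 2 \<le> n"
  shows "bruhat_step n (F n i (i+1)) (F n (i+2) (i+1))"
  apply (rule move[where a = i and b = "i+2"])
  using assms by (auto simp: roots_def Rel_def transpose_def)

lemma M3:
  assumes "(i,j) \<in> roots n" "j \<ge> 2" "j - 1 \<noteq> i"
  shows "bruhat_step n (F n i j) (F n i (j-1))"
  apply (rule move[where a = "j-1" and b = j])
  using assms by (auto simp: roots_def Rel_def transpose_def)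

lemma M4:
  assumes "(i,i+1) \<in> roots n" "i \<ge> 2"
  shows "bruhat_step n (F n i (i+1)) (F n i (i-1))"
  apply (rule move[where a = "i-1" and b = "i+1"])
  using assms by (auto simp: roots_def Rel_def transpose_def)

lemma M5:
  assumes "(i,i+1) \<in> roots n"
  shows "bruhat_step n (F n i (i+1)) (F n (i+1) i)"
  apply (rule move[where a = "i" and b = "i+1"])
  using assms by (auto simp: roots_def Rel_def transpose_def)


lemma hbar_pos: "j \<ge> 1 \<Longrightarrow> hbar h j = (if h0 h (j-1) = j-1 \<and> h j = j then j-1 else h j)"
  by (simp add: hbar_def)

lemma h0_pos: "k \<ge> 1 \<Longrightarrow> h0 h k = h k" by (simp add: h0_def)

lemma C1:
  assumes hs: "hessenberg n h" and c: "is_corner n h i j" and "i \<noteq> j"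
    and ab: "(a,b) \<in> roots n" "a \<le> h b" "i \<le> a" "b \<le> j"
  shows "a = i \<and> b = j"
proof -
  have hj: "\<And>k. k\<in>{1..n} \<Longrightarrow> k \<le> h k \<and> h k \<le> n"
    and hm: "\<And>k l. k \<in>{1..n} \<Longrightarrow> l\<in>{1..n} \<Longrightarrow> k \<le> l \<Longrightarrow> h k \<le> h l"
    using hs unfolding hessenberg_def by blast+
  have ij: "i \<in> {1..n}" "j \<in> {1..n}" "i = hbar h j" "hbar h (j-1) < hbar h j"
    using c by (auto simp: is_corner_def)
  have abn: "a \<in> {1..n}" "b \<in> {1..n}" "a \<noteq> b" using ab by (auto simp: roots_def)
  show ?thesis
  proof (cases "h0 h (j-1) = j-1 \<and> h j = j")
    case X: True
    then have i: "i = j - 1" using ij hbar_pos[of j h] by auto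
    then have j2: "j \<ge> 2" using ij by auto
    have hj1: "h (j-1) = j-1" using X h0_pos[of "j-1" h] j2 by auto
    have "h b \<le> h j" using hm abn ij ab by auto
    then have "a \<le> j" using X ab by auto
    have "a \<noteq> j"
    proof
      assume "a = j"
      then have "b \<le> j - 1" using abn ab by auto
      then have "h b \<le> h (j-1)" using hm abn ij j2 by auto
      then show False using hj1 \<open>a = j\<close> ab j2 by auto
    qed
    then have a: "a = j - 1" using \<open>a \<le> j\<close> ab i by auto
    have "b = j"
    proof (rule ccontr)
      assume "b \<noteq> j"
      then have b2: "b \<le> j - 2" using abn a ab by auto
      then have "h b \<le> h (j-2)" using hm abn ij j2 by auto
      then have "h (j-2) \<ge> j - 1" using a ab by auto
      moreover have "j - 2 \<ge> 1" using b2 abn by auto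
      ultimately have "h0 h (j-2) \<noteq> j - 2" using h0_pos[of "j-2" h] by auto
      then have "hbar h (j-1) = h (j-1)" using hbar_pos[of "j-1" h] j2
        by (auto simp: numeral_2_eq_2)
      then show False using ij hj1 i by auto
    qed
    then show ?thesis using a i by simp
  next
    case Y: False
    then have i: "i = h j" using ij hbar_pos[of j h] by auto
    have "h b \<le> h j" using hm abn ij ab by auto
    then have a: "a = i" "h b = h j" using ab i by auto
    have "b = j"
    proof (rule ccontr)
      assume "b \<noteq> j"
      then have b1: "b \<le> j - 1" "j \<ge> 2" using ab abn by auto
      then have "h b \<le> h (j-1)" "h (j-1) \<le> h j" using hm abn ij by auto
      then have e: "h (j-1) = h j" using a by auto
      have "h j \<ge> j" using hj ij by auto
      then have "hbar h (j-1) = h (j-1)" using hbar_pos[of "j-1" h] b1 e by auto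
      then show False using ij e i by auto
    qed
    then show ?thesis using a by simp
  qed
qed


lemma C2:
  assumes hs: "hessenberg n h" and r: "(i,j) \<in> roots n" and ih: "i \<le> h j"
    and nc: "\<not> is_corner n h i j"
  shows "\<exists>a b. (a,b) \<in> Delta_H n h \<and> (a,b) \<noteq> (i,j) \<and> bruhat_step n (F n i j) (F n a b)"
proof -
  have hj: "\<And>k. k\<in>{1..n} \<Longrightarrow> k \<le> h k \<and> h k \<le> n"
    and hm: "\<And>k l. k \<in>{1..n} \<Longrightarrow> l\<in>{1..n} \<Longrightarrow> k \<le> l \<Longrightarrow> h k \<le> h l"
    using hs unfolding hessenberg_def by blast+
  have ij: "i \<in> {1..n}" "j \<in> {1..n}" "i \<noteq> j" using r by (auto simp: roots_def)
  have hjn: "h j \<le> n" "j \<le> h j" using hj ij by auto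
  have nc': "i \<noteq> hbar h j \<or> hbar h j \<le> hbar h (j-1)" using nc ij by (auto simp: is_corner_def)
  show ?thesis
  proof (cases "i < hbar h j")
    case A: True
    have hb: "hbar h j \<le> h j" using hbar_pos[of j h] ij hjn by auto
    show ?thesis
    proof (cases "i + 1 = j")
      case False
      have "(i+1, j) \<in> Delta_H n h" using False A hb hjn ij by (auto simp: Delta_H_def roots_def)
      moreover have "bruhat_step n (F n i j) (F n (i+1) j)" using M1[OF r False] A hb hjn by auto
      ultimately show ?thesis by (intro exI[of _ "i+1"] exI[of _ j]) auto
    next
      case True
      then have nX: "\<not> (h0 h (j-1) = j-1 \<and> h j = j)" using A hbar_pos[of j h] ij by auto
      have r': "(i, i+1) \<in> roots n" using r True by simp
      show ?thesis
      proof (cases "h j \<ge> j + 1")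
        case True
        have "(i+2, i+1) \<in> Delta_H n h" using True \<open>i+1 = j\<close> hjn ij by (auto simp: Delta_H_def roots_def)
        moreover have "bruhat_step n (F n i j) (F n (i+2) (i+1))" using M2[OF r'] True \<open>i+1 = j\<close> hjn by auto
        ultimately show ?thesis using \<open>i+1 = j\<close> by (intro exI[of _ "i+2"] exI[of _ "i+1"]) auto
      next
        case False
        then have "h j = j" using hjn by auto
        then have "h i \<noteq> i" using nX h0_pos[of i h] \<open>i+1 = j\<close> ij by auto
        moreover have "i \<le> h i" "h i \<le> h j" using hj hm ij \<open>i+1 = j\<close> by auto
        ultimately have "h i = i + 1" using \<open>h j = j\<close> \<open>i+1 = j\<close> by auto
        then have "(i+1, i) \<in> Delta_H n h" using \<open>i+1 = j\<close> ij by (auto simp: Delta_H_def roots_def)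
        moreover have "bruhat_step n (F n i j) (F n (i+1) i)" using M5[OF r'] \<open>i+1 = j\<close> by auto
        ultimately show ?thesis using \<open>i+1 = j\<close> by (intro exI[of _ "i+1"] exI[of _ "i"]) auto
      qed
    qed
  next
    case B: False
    have ieq: "i = hbar h j"
    proof (rule ccontr)
      assume "i \<noteq> hbar h j"
      then have "hbar h j < i" using B by auto
      then show False
      proof (cases "h0 h (j-1) = j-1 \<and> h j = j")
        case True then show False using hbar_pos[of j h] ij ih \<open>hbar h j < i\<close> by simp
      next
        case False then show False using hbar_pos[of j h] ij ih \<open>hbar h j < i\<close> by auto
      qed
    qed
    then have le: "hbar h j \<le> hbar h (j-1)" using nc' by auto
    have j2: "j \<ge> 2"
    proof (rule ccontr)
      assume "\<not> j \<ge> 2"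
      then have "j = 1" using ij by auto
      then have "hbar h (j-1) = 0" by (simp add: hbar_def)
      then show False using le ieq ij by auto
    qed
    show ?thesis
    proof (cases "h0 h (j-1) = j-1 \<and> h j = j")
      case Y: False
      then have i: "i = h j" using ieq hbar_pos[of j h] ij by auto
      have hb1: "hbar h (j-1) = (if h0 h (j-2) = j-2 \<and> h (j-1) = j-1 then j-2 else h (j-1))"
        using hbar_pos[of "j-1" h] j2 by (simp add: numeral_2_eq_2)
      have "h (j-1) \<le> h j" using hm ij j2 by auto
      moreover have "\<not> (h0 h (j-2) = j-2 \<and> h (j-1) = j-1)"
      proof
        assume "h0 h (j-2) = j-2 \<and> h (j-1) = j-1"
        then have "hbar h (j-1) = j - 2" using hb1 by simp
        then show False using le ieq i hjn(2) j2 by linarith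
      qed
      then have "hbar h (j-1) = h (j-1)" unfolding hb1 by (rule if_not_P)
      ultimately have e: "h (j-1) = h j" using le ieq i by linarith
      then have "i \<noteq> j - 1" using i hjn(2) j2 by linarith
      moreover have "(i, j-1) \<in> Delta_H n h" using e i ij j2 \<open>i \<noteq> j-1\<close> by (auto simp: Delta_H_def roots_def)
      moreover have "bruhat_step n (F n i j) (F n i (j-1))" using M3[OF r j2] calculation by auto
      moreover have "(i, j-1) \<noteq> (i, j)" using j2 by simp
      ultimately show ?thesis by blast
    next
      case X: True
      then have i: "i = j - 1" using ieq hbar_pos[of j h] ij by auto
      have hj1: "h (j-1) = j-1" using X h0_pos[of "j-1" h] j2 by auto
      have hb1: "hbar h (j-1) = (if h0 h (j-2) = j-2 \<and> h (j-1) = j-1 then j-2 else h (j-1))"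
        using hbar_pos[of "j-1" h] j2 by (simp add: numeral_2_eq_2)
      have "h0 h (j-2) \<noteq> j - 2"
      proof
        assume "h0 h (j-2) = j-2"
        then have "hbar h (j-1) = j - 2" using hb1 hj1 by simp
        then show False using le ieq i j2 by linarith
      qed
      then have j3: "j \<ge> 3" and hn: "h (j-2) \<noteq> j-2"
        proof -
        show "j \<ge> 3"
        proof (rule ccontr)
          assume "\<not> j \<ge> 3" then have "j - 2 = 0" by simp
          then show False using \<open>h0 h (j-2) \<noteq> j - 2\<close> by (simp add: h0_def)
        qed
        then show "h (j-2) \<noteq> j-2" using \<open>h0 h (j-2) \<noteq> j - 2\<close> h0_pos[of "j-2" h] by simp
      qed
      have jj: "j - 2 \<in> {1..n}" "j - 1 \<in> {1..n}" "j - 2 \<le> j - 1" using ij j3 by auto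
      have "j - 2 \<le> h (j-2)" "h (j-2) \<le> h (j-1)" using hj[OF jj(1)] hm[OF jj] by auto
      then have e: "h (j-2) = j - 1" using hj1 hn by linarith
      have r': "(i, i+1) \<in> roots n" using r i j2 by (simp add: numeral_2_eq_2)
      have ip: "i + 1 = j" "i - 1 = j - 2" using i j2 by auto
      have "(i, i-1) \<in> Delta_H n h" using e i ij j3 ip by (auto simp: Delta_H_def roots_def)
      moreover have "bruhat_step n (F n i j) (F n i (i-1))" using M4[OF r'] i j3 ip(1) by auto
      moreover have "(i, i-1) \<noteq> (i, j)" using ip by auto
      ultimately show ?thesis by blast
    qed
  qed
qed


theorem mainTheorem14:
  fixes n :: nat and h :: "nat \<Rightarrow> nat" and i j :: nat
  assumes "n \<ge> 2"
    and "hessenberg n h"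
    and "(i, j) \<in> roots n"
  shows "bruhat_maximal n (Omega_H n h) (w_root n (i, j)) \<longleftrightarrow> is_corner n h i j"
proof -
  note r = assms(3)
  have ijn: "i \<in> {1..n}" "j \<in> {1..n}" "i \<noteq> j" using r by (auto simp: roots_def)
  have DR: "\<And>a b. (a,b) \<in> Delta_H n h \<Longrightarrow> (a,b) \<in> roots n" by (simp add: Delta_H_def)
  have wr: "w_root n (i,j) = F n i j" using w_root_F[OF r] .
  have Om: "\<And>u. u \<in> Omega_H n h \<longleftrightarrow> (\<exists>a b. (a,b) \<in> Delta_H n h \<and> u = F n a b)"
    unfolding Omega_H_def using w_root_F DR by force
  have injF: "\<And>a b. (a,b) \<in> roots n \<Longrightarrow> F n a b = F n i j \<Longrightarrow> a = i \<and> b = j"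
  proof -
    fix a b assume ab: "(a,b) \<in> roots n" "F n a b = F n i j"
    have abn: "a \<in> {1..n}" "b \<in> {1..n}" using ab by (auto simp: roots_def)
    have "F n i j a = 1" "F n i j b = n" using F_vals[OF ab(1)] ab(2) by auto
    then show "a = i \<and> b = j" using F_vals2[OF r abn(1)] F_vals2[OF r abn(2)] by auto
  qed
  have Pij: "F n i j \<in> perms n" using F_perm[OF r] by (simp add: perms_def)
  show ?thesis
  proof
    assume mx: "bruhat_maximal n (Omega_H n h) (w_root n (i, j))"
    then have "F n i j \<in> Omega_H n h" using wr by (simp add: bruhat_maximal_def)
    then obtain a b where "(a,b) \<in> Delta_H n h" "F n i j = F n a b" using Om by blast
    then have "(i,j) \<in> Delta_H n h" using injF[OF DR] by metis
    then have ih: "i \<le> h j" by (simp add: Delta_H_def)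
    show "is_corner n h i j"
    proof (rule ccontr)
      assume "\<not> is_corner n h i j"
      then obtain a b where ab: "(a,b) \<in> Delta_H n h" "(a,b) \<noteq> (i,j)" "bruhat_step n (F n i j) (F n a b)"
        using C2[OF assms(2) r ih] by blast
      have "F n a b \<in> perms n" using F_perm[OF DR[OF ab(1)]] by (simp add: perms_def)
      then have "bruhat_le n (F n i j) (F n a b)" using Pij ab(3) by (simp add: bruhat_le_def)
      moreover have "F n a b \<in> Omega_H n h" using Om ab(1) by blast
      ultimately have "F n a b = F n i j" using mx wr by (simp add: bruhat_maximal_def)
      then show False using injF[OF DR[OF ab(1)]] ab(2) by simp
    qed
  next
    assume c: "is_corner n h i j"
    have hj: "j \<le> h j" using assms(2) ijn by (simp add: hessenberg_def)
    have "hbar h j \<le> h j" using hbar_pos[of j h] ijn hj by auto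
    then have "i \<le> h j" using c by (simp add: is_corner_def)
    then have D: "(i,j) \<in> Delta_H n h" using r by (simp add: Delta_H_def)
    show "bruhat_maximal n (Omega_H n h) (w_root n (i, j))"
      unfolding bruhat_maximal_def wr
    proof (intro conjI ballI impI)
      show "F n i j \<in> Omega_H n h" using Om D by blast
      fix u assume u: "u \<in> Omega_H n h" "bruhat_le n (F n i j) u"
      then obtain a b where ab: "(a,b) \<in> Delta_H n h" "u = F n a b" using Om by blast
      have "i \<le> a \<and> b \<le> j" using F_le_nec[OF r DR[OF ab(1)]] u(2) ab(2) by simp
      moreover have "a \<le> h b" using ab(1) by (simp add: Delta_H_def)
      ultimately have "a = i \<and> b = j" using C1[OF assms(2) c ijn(3) DR[OF ab(1)]] by simp
      then show "u = F n i j" using ab(2) by simp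
    qed
  qed
qed

end
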